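(* Let $M=(S,\mathrm{Act},P)$ be an MDP, $T\subseteq S$, $\mathrm{opt}\in\{\min,\max\}$, and let $r$ be the least fixed point of the complementary distance operator $\tilde D^{\mathrm{opt}}$ (w.r.t. the pointwise order on $\mathbb{N}_\infty^S$). Then for all $s\in S$: $r(s)=\infty$ if and only if $\Pr^{\mathrm{opt}}_s(\Diamond T)=1$.
   Context: An MDP is a tuple $M=(S,\mathrm{Act},P)$ with $S$ finite, $\mathrm{Act}$ finite, $P\colon S\times\mathrm{Act}\times S\to[0,1]$ with $\sum_{s'}P(s,a,s')\in\{0,1\}$; $\mathrm{Act}(s)=\{a\mid\sum_{s'}P(s,a,s')=1\}$ is nonempty for all $s$; $\mathrm{Post}(s,a)=\{s'\mid P(s,a,s')>0\}$. A strategy is $\sigma\colon S\to\mathrm{Act}$ with $\sigma(s)\in\mathrm{Act}(s)$, inducing a Markov chain with transitions $P(s,\sigma(s),\cdot)$; $\Pr^\sigma_s(\Diamond T)$ is the probability of visiting $T$ from $s$ and $\Pr^{\mathrm{opt}}_s(\Diamond T)=\mathrm{opt}_\sigma\Pr^\sigma_s(\Diamond T)$. $\mathbb{N}_\infty=\mathbb{N}\cup\{\infty\}$ with $\infty+1=\infty$. The complementary distance operator $\tilde D^{\mathrm{opt}}\colon\mathbb{N}_\infty^S\to\mathbb{N}_\infty^S$ is $\tilde D^{\mathrm{opt}}(r)(s)=\infty$ if $s\in T$, and for $s\notin T$: $\tilde D^{\mathrm{opt}}(r)(s)=\mathrm{opt}_{a\in\mathrm{Act}(s)}\big(\min_{s'\in\mathrm{Post}(s,a)}r(s')+[\exists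 u,v\in\mathrm{Post}(s,a)\colon r(u)\neq r(v)]\big)$, where $[\varphi]$ is $1$ if $\varphi$ holds and $0$ otherwise. This operator is monotone, so its least fixed point exists. *)

theory Defs
  imports Complex_Main "HOL-Library.Extended_Nat"
begin

text \<open>An MDP over a finite state type 's and finite action type 'a,
  given by its transition function P s a s'.  The state space S is UNIV.\<close>

definition Act :: "('s::finite \<Rightarrow> 'a::finite \<Rightarrow> 's \<Rightarrow> real) \<Rightarrow> 's \<Rightarrow> 'a set" where
  "Act P s = {a. (\<Sum>s'\<in>UNIV. P s a s') = 1}"

definition Post :: "('s::finite \<Rightarrow> 'a::finite \<Rightarrow> 's \<Rightarrow> real) \<Rightarrow> 's \<Rightarrow> 'a \<Rightarrow> 's set" where
  "Post P s a = {s'. P s a s' > 0}"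

definition is_mdp :: "('s::finite \<Rightarrow> 'a::finite \<Rightarrow> 's \<Rightarrow> real) \<Rightarrow> bool" where
  "is_mdp P \<longleftrightarrow>
     (\<forall>s a s'. 0 \<le> P s a s' \<and> P s a s' \<le> 1) \<and>
     (\<forall>s a. (\<Sum>s'\<in>UNIV. P s a s') \<in> {0, 1}) \<and>
     (\<forall>s. Act P s \<noteq> {})"

definition strategies :: "('s::finite \<Rightarrow> 'a::finite \<Rightarrow> 's \<Rightarrow> real) \<Rightarrow> ('s \<Rightarrow> 'a) set" where
  "strategies P = {\<sigma>. \<forall>s. \<sigma> s \<in> Act P s}"

fun reach_within :: "('s::finite \<Rightarrow> 'a::finite \<Rightarrow> 's \<Rightarrow> real) \<Rightarrow> ('s \<Rightarrow> 'a) \<Rightarrow> 's set \<Rightarrow> nat \<Rightarrow> 's \<Rightarrow> real" where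
  "reach_within P \<sigma> T 0 s = (if s \<in> T then 1 else 0)"
| "reach_within P \<sigma> T (Suc n) s =
     (if s \<in> T then 1 else (\<Sum>s'\<in>UNIV. P s (\<sigma> s) s' * reach_within P \<sigma> T n s'))"

definition reach_prob :: "('s::finite \<Rightarrow> 'a::finite \<Rightarrow> 's \<Rightarrow> real) \<Rightarrow> ('s \<Rightarrow> 'a) \<Rightarrow> 's set \<Rightarrow> 's \<Rightarrow> real" where
  "reach_prob P \<sigma> T s = (SUP n. reach_within P \<sigma> T n s)"

datatype opt = OMin | OMax

definition opt_real :: "opt \<Rightarrow> real set \<Rightarrow> real" where
  "opt_real o' X = (case o' of OMin \<Rightarrow> Inf X | OMax \<Rightarrow> Sup X)"

definition opt_enat :: "opt \<Rightarrow> enat set \<Rightarrow> enat" where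
  "opt_enat o' X = (case o' of OMin \<Rightarrow> Min X | OMax \<Rightarrow> Max X)"

definition reach_prob_opt :: "opt \<Rightarrow> ('s::finite \<Rightarrow> 'a::finite \<Rightarrow> 's \<Rightarrow> real) \<Rightarrow> 's set \<Rightarrow> 's \<Rightarrow> real" where
  "reach_prob_opt o' P T s = opt_real o' ((\<lambda>\<sigma>. reach_prob P \<sigma> T s) ` strategies P)"

definition Dtilde :: "opt \<Rightarrow> ('s::finite \<Rightarrow> 'a::finite \<Rightarrow> 's \<Rightarrow> real) \<Rightarrow> 's set \<Rightarrow> ('s \<Rightarrow> enat) \<Rightarrow> ('s \<Rightarrow> enat)" where
  "Dtilde o' P T r s =
     (if s \<in> T then \<infinity>
      else opt_enat o' ((\<lambda>a. Min (r ` Post P s a)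
              + (if \<exists>u\<in>Post P s a. \<exists>v\<in>Post P s a. r u \<noteq> r v then 1 else 0)) ` Act P s))"

end

theory Submission
  imports Defs
begin

lemma mdp_nonneg: "is_mdp P \<Longrightarrow> 0 \<le> P s a v" by (simp add: is_mdp_def)
lemma Act_ne: "is_mdp P \<Longrightarrow> Act P s \<noteq> {}" by (simp add: is_mdp_def)
lemma Act_sum: "a \<in> Act P s \<Longrightarrow> (\<Sum>v\<in>UNIV. P s a v) = 1" by (simp add: Act_def)

lemma Post_ne:
  assumes "is_mdp P" "a \<in> Act P s" shows "Post P s a \<noteq> {}"
proof
  assume "Post P s a = {}"
  have "P s a v = 0" for v
  proof -
    have "v \<notin> Post P s a" using \<open>Post P s a = {}\<close> by simp
    then have "\<not> 0 < P s a v" by (simp add: Post_def)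
    with mdp_nonneg[OF assms(1), of s a v] show ?thesis by simp
  qed
  then have "(\<Sum>v\<in>UNIV. P s a v) = 0" by simp
  with Act_sum[OF assms(2)] show False by simp
qed

lemma ind_le1: "(if b then 1 else 0::enat) \<le> 1" by simp
lemma ind_fin: "(if b then 1 else 0::enat) \<noteq> \<infinity>" by (simp add: one_enat_def zero_enat_def)
lemma le_plus_ind: "(x::enat) \<le> x + (if b then 1 else 0)" by simp

definition tm :: "('s::finite \<Rightarrow> 'a::finite \<Rightarrow> 's \<Rightarrow> real) \<Rightarrow> ('s \<Rightarrow> enat) \<Rightarrow> 's \<Rightarrow> 'a \<Rightarrow> enat" where
  "tm P r s a = Min (r ` Post P s a)
      + (if \<exists>u\<in>Post P s a. \<exists>v\<in>Post P s a. r u \<noteq> r v then 1 else 0)"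

lemma Dt_eq: "Dtilde o' P T r s = (if s \<in> T then \<infinity> else opt_enat o' (tm P r s ` Act P s))"
  by (simp add: Dtilde_def tm_def)

lemma Min_mono_img:
  fixes f g :: "_ \<Rightarrow> 'b::linorder"
  assumes "finite I" "I \<noteq> {}" "\<And>i. i \<in> I \<Longrightarrow> f i \<le> g i"
  shows "Min (f ` I) \<le> Min (g ` I)"
proof -
  have "Min (g ` I) \<in> g ` I" by (rule Min_in) (use assms in auto)
  then obtain i where i: "i \<in> I" "Min (g ` I) = g i" by auto
  have a: "Min (f ` I) \<le> f i" using i assms by simp
  have b: "f i \<le> g i" using assms(3) i(1) .
  from order.trans[OF a b] i(2) show ?thesis by simp
qed

lemma Max_mono_img:
  fixes f g :: "_ \<Rightarrow> 'b::linorder"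
  assumes "finite I" "I \<noteq> {}" "\<And>i. i \<in> I \<Longrightarrow> f i \<le> g i"
  shows "Max (f ` I) \<le> Max (g ` I)"
proof -
  have "Max (f ` I) \<in> f ` I" by (rule Max_in) (use assms in auto)
  then obtain i where i: "i \<in> I" "Max (f ` I) = f i" by auto
  have a: "g i \<le> Max (g ` I)" using i assms by simp
  have b: "f i \<le> g i" using assms(3) i(1) .
  from order.trans[OF b a] i(2) show ?thesis by simp
qed

lemma tm_mono:
  assumes mdp: "is_mdp P" and a: "a \<in> Act P s" and le: "\<And>v. r v \<le> r' v"
  shows "tm P r s a \<le> tm P r' s a"
proof -
  let ?X = "Post P s a"
  have fin: "finite ?X" by simp
  have ne: "?X \<noteq> {}" using Post_ne[OF mdp a] .
  have mm: "Min (r ` ?X) \<le> Min (r' ` ?X)" by (rule Min_mono_img[OF fin ne le])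
  show ?thesis
  proof (cases "\<exists>u\<in>?X. \<exists>v\<in>?X. r u \<noteq> r v")
    case True
    note T1 = True
    show ?thesis
    proof (cases "\<exists>u\<in>?X. \<exists>v\<in>?X. r' u \<noteq> r' v")
      case True
      show ?thesis unfolding tm_def
        by (simp only: if_P[OF T1] if_P[OF True] if_True) (rule add_right_mono[OF mm])
    next
      case False
      obtain x0 where x0: "x0 \<in> ?X" using ne by blast
      obtain c0 where c: "\<forall>v\<in>?X. r' v = c0" using False x0 by blast
      have mc: "Min (r' ` ?X) = c0"
      proof -
        have "r' ` ?X = {c0}" using c x0 by auto
        then show ?thesis by simp
      qed
      obtain a b where ab: "a \<in> ?X" "b \<in> ?X" "r a \<noteq> r b" using T1 by blast
      obtain w where w: "w \<in> ?X" "r w \<noteq> Min (r ` ?X)"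
      proof (cases "r a = Min (r ` ?X)")
        case True then show ?thesis using that[of b] ab by simp
      next
        case False then show ?thesis using that[of a] ab by simp
      qed
      have "Min (r ` ?X) \<le> r w" using w fin by simp
      then have "Min (r ` ?X) < r w" using w(2) by (intro order_le_neq_trans) auto
      also have "r w \<le> r' w" by (rule le)
      also have "\<dots> = c0" using c w(1) by blast
      finally have "eSuc (Min (r ` ?X)) \<le> c0" by (rule ileI1)
      then have "Min (r ` ?X) + 1 \<le> c0" by (simp only: eSuc_plus_1)
      then show ?thesis unfolding tm_def
        by (simp only: if_P[OF T1] if_not_P[OF False] if_True if_False add_0_right mc)
    qed
  next
    case False
    then have "tm P r s a = Min (r ` ?X)" unfolding tm_def by (simp only: if_not_P[OF False] if_False add_0_right)
    also have "\<dots> \<le> Min (r' ` ?X)" by (rule mm)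
    also have "\<dots> \<le> tm P r' s a" unfolding tm_def by (rule le_plus_ind)
    finally show ?thesis .
  qed
qed

lemma Dt_mono:
  assumes mdp: "is_mdp P" shows "mono (Dtilde o' P T)"
proof (rule monoI, rule le_funI)
  fix r r' :: "'a \<Rightarrow> enat" and s
  assume "r \<le> r'"
  then have le: "\<And>v. r v \<le> r' v" by (simp add: le_fun_def)
  have fin: "finite (Act P s)" by simp
  have ne: "Act P s \<noteq> {}" using Act_ne[OF mdp] .
  have tl: "\<And>a. a \<in> Act P s \<Longrightarrow> tm P r s a \<le> tm P r' s a" using tm_mono[OF mdp _ le] .
  show "Dtilde o' P T r s \<le> Dtilde o' P T r' s"
  proof (cases "s \<in> T")
    case True then show ?thesis by (simp add: Dt_eq)
  next
    case False
    show ?thesis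
    proof (cases o')
      case OMin
      have "Min (tm P r s ` Act P s) \<le> Min (tm P r' s ` Act P s)" by (rule Min_mono_img[OF fin ne tl])
      then show ?thesis using False OMin by (simp add: Dt_eq opt_enat_def)
    next
      case OMax
      have "Max (tm P r s ` Act P s) \<le> Max (tm P r' s ` Act P s)" by (rule Max_mono_img[OF fin ne tl])
      then show ?thesis using False OMax by (simp add: Dt_eq opt_enat_def)
    qed
  qed
qed

definition Ed :: "('s::finite \<Rightarrow> 'a::finite \<Rightarrow> 's \<Rightarrow> real) \<Rightarrow> ('s \<Rightarrow> 'a) \<Rightarrow> 's set \<Rightarrow> ('s \<times> 's) set" where
  "Ed P \<sigma> T = {(u,v). u \<notin> T \<and> 0 < P u (\<sigma> u) v}"

lemma strat_act: "\<sigma> \<in> strategies P \<Longrightarrow> \<sigma> u \<in> Act P u"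
  by (simp add: strategies_def)

lemma rw_bounds:
  assumes mdp: "is_mdp P" and st: "\<sigma> \<in> strategies P"
  shows "0 \<le> reach_within P \<sigma> T n u \<and> reach_within P \<sigma> T n u \<le> 1"
proof (induction n arbitrary: u)
  case 0 show ?case by simp
next
  case (Suc n)
  have a: "\<sigma> u \<in> Act P u" using strat_act[OF st] .
  have "(\<Sum>v\<in>UNIV. P u (\<sigma> u) v * reach_within P \<sigma> T n v) \<le> (\<Sum>v\<in>UNIV. P u (\<sigma> u) v * 1)"
    by (rule sum_mono, rule mult_left_mono) (use Suc mdp_nonneg[OF mdp] in auto)
  also have "\<dots> = 1" using Act_sum[OF a] by simp
  finally have le: "(\<Sum>v\<in>UNIV. P u (\<sigma> u) v * reach_within P \<sigma> T n v) \<le> 1" .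
  have ge: "0 \<le> (\<Sum>v\<in>UNIV. P u (\<sigma> u) v * reach_within P \<sigma> T n v)"
    by (rule sum_nonneg, rule mult_nonneg_nonneg) (use Suc mdp_nonneg[OF mdp] in auto)
  show ?case using le ge by simp
qed

lemma rw_mono:
  assumes mdp: "is_mdp P" and st: "\<sigma> \<in> strategies P"
  shows "reach_within P \<sigma> T n u \<le> reach_within P \<sigma> T (Suc n) u"
proof (induction n arbitrary: u)
  case 0
  have "0 \<le> (\<Sum>v\<in>UNIV. P u (\<sigma> u) v * reach_within P \<sigma> T 0 v)"
    by (rule sum_nonneg, rule mult_nonneg_nonneg) (auto simp: mdp_nonneg[OF mdp])
  then show ?case by simp
next
  case (Suc n)
  have "(\<Sum>v\<in>UNIV. P u (\<sigma> u) v * reach_within P \<sigma> T n v)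
      \<le> (\<Sum>v\<in>UNIV. P u (\<sigma> u) v * reach_within P \<sigma> T (Suc n) v)"
    by (rule sum_mono, rule mult_left_mono) (use Suc mdp_nonneg[OF mdp] in auto)
  then show ?case by simp
qed

lemma rw_lim:
  assumes mdp: "is_mdp P" and st: "\<sigma> \<in> strategies P"
  shows "(\<lambda>n. reach_within P \<sigma> T n u) \<longlonglongrightarrow> reach_prob P \<sigma> T u"
  unfolding reach_prob_def
proof (rule LIMSEQ_incseq_SUP)
  show "bdd_above (range (\<lambda>n. reach_within P \<sigma> T n u))"
    using rw_bounds[OF mdp st] by (intro bdd_aboveI[of _ 1]) auto
  show "incseq (\<lambda>n. reach_within P \<sigma> T n u)"
    by (rule incseq_SucI) (rule rw_mono[OF mdp st])
qed

lemma rp_bounds: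
  assumes mdp: "is_mdp P" and st: "\<sigma> \<in> strategies P"
  shows "0 \<le> reach_prob P \<sigma> T u \<and> reach_prob P \<sigma> T u \<le> 1"
proof
  show "0 \<le> reach_prob P \<sigma> T u"
    by (rule LIMSEQ_le_const[OF rw_lim[OF mdp st]]) (use rw_bounds[OF mdp st] in auto)
  show "reach_prob P \<sigma> T u \<le> 1"
    by (rule LIMSEQ_le_const2[OF rw_lim[OF mdp st]]) (use rw_bounds[OF mdp st] in auto)
qed

lemma rp_T:
  assumes "u \<in> T" shows "reach_prob P \<sigma> T u = 1"
proof -
  have "reach_within P \<sigma> T n u = 1" for n using assms by (cases n) auto
  then show ?thesis by (simp add: reach_prob_def)
qed

lemma rp_eq:
  assumes mdp: "is_mdp P" and st: "\<sigma> \<in> strategies P" and u: "u \<notin> T"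
  shows "reach_prob P \<sigma> T u = (\<Sum>v\<in>UNIV. P u (\<sigma> u) v * reach_prob P \<sigma> T v)"
proof -
  have 1: "(\<lambda>n. reach_within P \<sigma> T (Suc n) u) \<longlonglongrightarrow> reach_prob P \<sigma> T u"
    using LIMSEQ_Suc[OF rw_lim[OF mdp st]] .
  have 2: "(\<lambda>n. reach_within P \<sigma> T (Suc n) u) = (\<lambda>n. \<Sum>v\<in>UNIV. P u (\<sigma> u) v * reach_within P \<sigma> T n v)"
    using u by simp
  have 3: "(\<lambda>n. \<Sum>v\<in>UNIV. P u (\<sigma> u) v * reach_within P \<sigma> T n v) \<longlonglongrightarrow> (\<Sum>v\<in>UNIV. P u (\<sigma> u) v * reach_prob P \<sigma> T v)"
    by (intro tendsto_sum tendsto_mult_left rw_lim[OF mdp st])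
  from 1 have "(\<lambda>n. \<Sum>v\<in>UNIV. P u (\<sigma> u) v * reach_within P \<sigma> T n v) \<longlonglongrightarrow> reach_prob P \<sigma> T u"
    by (simp only: 2)
  from LIMSEQ_unique[OF this 3] show ?thesis .
qed

lemma rp_prop:
  assumes mdp: "is_mdp P" and st: "\<sigma> \<in> strategies P" and u: "u \<notin> T"
    and h: "reach_prob P \<sigma> T u = 1" and p: "0 < P u (\<sigma> u) v"
  shows "reach_prob P \<sigma> T v = 1"
proof -
  let ?h = "reach_prob P \<sigma> T"
  have "(\<Sum>w\<in>UNIV. P u (\<sigma> u) w * (1 - ?h w)) = (\<Sum>w\<in>UNIV. P u (\<sigma> u) w) - (\<Sum>w\<in>UNIV. P u (\<sigma> u) w * ?h w)"
    by (simp add: algebra_simps sum_subtractf)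
  also have "\<dots> = 0" using Act_sum[OF strat_act[OF st]] rp_eq[OF mdp st u] h by simp
  finally have s0: "(\<Sum>w\<in>UNIV. P u (\<sigma> u) w * (1 - ?h w)) = 0" .
  have nn: "\<forall>w\<in>UNIV. 0 \<le> P u (\<sigma> u) w * (1 - ?h w)"
    using mdp_nonneg[OF mdp] rp_bounds[OF mdp st] by simp
  have "P u (\<sigma> u) v * (1 - ?h v) = 0"
    using s0 nn sum_nonneg_eq_0_iff[of UNIV "\<lambda>w. P u (\<sigma> u) w * (1 - ?h w)"] by simp
  then show ?thesis using p by simp
qed

lemma rw_closed:
  assumes mdp: "is_mdp P"
    and cl: "\<forall>u\<in>C. u \<notin> T \<and> (\<forall>v. 0 < P u (\<sigma> u) v \<longrightarrow> v \<in> C)"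
  shows "u \<in> C \<Longrightarrow> reach_within P \<sigma> T n u = 0"
proof (induction n arbitrary: u)
  case 0 then show ?case using cl by simp
next
  case (Suc n)
  have z: "P u (\<sigma> u) v * reach_within P \<sigma> T n v = 0" for v
  proof (cases "0 < P u (\<sigma> u) v")
    case True then show ?thesis using cl Suc by simp
  next
    case False then show ?thesis using mdp_nonneg[OF mdp, of u "\<sigma> u" v] by simp
  qed
  have "(\<Sum>v\<in>UNIV. P u (\<sigma> u) v * reach_within P \<sigma> T n v) = 0"
    by (rule sum.neutral) (use z in simp)
  then show ?case using cl Suc.prems by simp
qed

lemma lemA:
  assumes mdp: "is_mdp P" and st: "\<sigma> \<in> strategies P"
    and rT: "\<forall>t\<in>T. r t = \<infinity>"
    and rle: "\<forall>u. u \<notin> T \<longrightarrow> tm P r u (\<sigma> u) \<le> r u"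
    and h: "reach_prob P \<sigma> T s = 1"
  shows "r s = \<infinity>"
proof (rule ccontr)
  assume rs: "r s \<noteq> \<infinity>"
  define R where "R = {v. (s,v) \<in> (Ed P \<sigma> T)\<^sup>*}"
  have hR: "reach_prob P \<sigma> T v = 1" if "v \<in> R" for v
  proof -
    have "(s,v) \<in> (Ed P \<sigma> T)\<^sup>*" using that R_def by simp
    then show ?thesis
    proof (induction rule: rtrancl_induct)
      case base then show ?case using h .
    next
      case (step y z)
      then have "y \<notin> T" "0 < P y (\<sigma> y) z" by (auto simp: Ed_def)
      then show ?case by (rule rp_prop[OF mdp st _ step.IH])
    qed
  qed
  have sR: "s \<in> R" by (simp add: R_def)
  have finR: "finite R" by simp
  define m where "m = Min (r ` R)"
  have "m \<in> r ` R" unfolding m_def by (rule Min_in) (use sR in auto)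
  then obtain u0 where u0: "u0 \<in> R" "r u0 = m" by auto
  have "m \<le> r s" unfolding m_def using sR by simp
  then have mfin: "m \<noteq> \<infinity>"
  proof (intro notI)
    assume "m \<le> r s" "m = \<infinity>"
    then show False using rs by simp
  qed
  define C where "C = {v\<in>R. r v = m}"
  have cl: "\<forall>u\<in>C. u \<notin> T \<and> (\<forall>v. 0 < P u (\<sigma> u) v \<longrightarrow> v \<in> C)"
  proof (intro ballI conjI allI impI)
    fix u assume uC: "u \<in> C"
    then show uT: "u \<notin> T" using rT mfin by (auto simp: C_def)
    let ?X = "Post P u (\<sigma> u)"
    have ne: "?X \<noteq> {}" using Post_ne[OF mdp strat_act[OF st]] .
    have XR: "?X \<subseteq> R"
    proof
      fix w assume "w \<in> ?X"
      then have "(u,w) \<in> Ed P \<sigma> T" using uT by (simp add: Ed_def Post_def)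
      then show "w \<in> R" using uC by (auto simp: C_def R_def intro: rtrancl_into_rtrancl)
    qed
    have geX: "\<forall>w\<in>?X. m \<le> r w" using XR unfolding m_def by auto
    have Mge: "m \<le> Min (r ` ?X)" using geX ne by simp
    have tle: "tm P r u (\<sigma> u) \<le> m" using rle uT uC by (auto simp: C_def)
    have noind: "\<not> (\<exists>a\<in>?X. \<exists>b\<in>?X. r a \<noteq> r b)"
    proof
      assume "\<exists>a\<in>?X. \<exists>b\<in>?X. r a \<noteq> r b"
      then have "Min (r ` ?X) + 1 \<le> m" using tle unfolding tm_def by (simp only: if_P if_True)
      then have a: "Min (r ` ?X) + 1 \<le> m" .
      have b: "Min (r ` ?X) + 1 \<le> Min (r ` ?X)" using a Mge by (rule order_trans)
      have c: "Min (r ` ?X) \<noteq> \<infinity>"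
      proof
        assume "Min (r ` ?X) = \<infinity>"
        then have "m = \<infinity>" using a by simp
        then show False using mfin by simp
      qed
      then obtain n where "Min (r ` ?X) = enat n" by auto
      then show False using b by (simp add: one_enat_def)
    qed
    have Mle: "Min (r ` ?X) \<le> m" using tle unfolding tm_def by (simp only: if_not_P[OF noind] if_False add_0_right)
    have "Min (r ` ?X) \<in> r ` ?X" by (rule Min_in) (use ne in auto)
    then obtain w0 where w0: "w0 \<in> ?X" "r w0 = Min (r ` ?X)" by auto
    fix v assume "0 < P u (\<sigma> u) v"
    then have vX: "v \<in> ?X" by (simp add: Post_def)
    have "r v = r w0" using noind vX w0 by blast
    then have "r v = m" using Mle Mge w0 by simp
    then show "v \<in> C" using vX XR by (auto simp: C_def)
  qed
  have "reach_within P \<sigma> T n u0 = 0" for n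
    using rw_closed[OF mdp cl] u0 by (simp add: C_def)
  then have "reach_prob P \<sigma> T u0 = 0" by (simp add: reach_prob_def)
  moreover have "reach_prob P \<sigma> T u0 = 1" using hR u0 by simp
  ultimately show False by simp
qed

lemma lemB:
  assumes mdp: "is_mdp P" and st: "\<sigma> \<in> strategies P"
    and clG: "\<forall>u\<in>G. u \<notin> T \<longrightarrow> (\<forall>v. 0 < P u (\<sigma> u) v \<longrightarrow> v \<in> G)"
    and reachT: "\<forall>u\<in>G. \<exists>t\<in>T. (u,t) \<in> (Ed P \<sigma> T)\<^sup>*"
  shows "\<forall>u\<in>G. reach_prob P \<sigma> T u = 1"
proof (rule ccontr)
  let ?h = "reach_prob P \<sigma> T"
  assume "\<not> (\<forall>u\<in>G. ?h u = 1)"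
  then obtain u1 where u1: "u1 \<in> G" "?h u1 \<noteq> 1" by blast
  have finG: "finite G" by simp
  define m where "m = Min (?h ` G)"
  have "m \<in> ?h ` G" unfolding m_def by (rule Min_in) (use u1 in auto)
  then obtain u0 where u0: "u0 \<in> G" "?h u0 = m" by auto
  have "m \<le> ?h u1" unfolding m_def using u1 by simp
  then have m1: "m < 1" using u1 rp_bounds[OF mdp st, of T u1] by simp
  have mle: "\<forall>v\<in>G. m \<le> ?h v" unfolding m_def by simp
  define M where "M = {v\<in>G. ?h v = m}"
  have MT: "\<forall>u\<in>M. u \<notin> T"
  proof (intro ballI notI)
    fix u assume "u \<in> M" "u \<in> T"
    then have "?h u = m" "?h u = 1" using rp_T[of u T P \<sigma>] by (auto simp: M_def)
    then show False using m1 by simp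
  qed
  have stepM: "v \<in> M" if uM: "u \<in> M" and p: "0 < P u (\<sigma> u) v" for u v
  proof -
    have uT: "u \<notin> T" using MT uM by blast
    have uG: "u \<in> G" using uM M_def by simp
    have vG: "v \<in> G" using clG uG uT p by blast
    have hu: "?h u = m" using uM M_def by simp
    have e1: "(\<Sum>w\<in>UNIV. P u (\<sigma> u) w * ?h w) = m" using trans[OF rp_eq[OF mdp st uT, symmetric] hu] .
    have "(\<Sum>w\<in>UNIV. P u (\<sigma> u) w * (?h w - m)) = (\<Sum>w\<in>UNIV. P u (\<sigma> u) w * ?h w) - m * (\<Sum>w\<in>UNIV. P u (\<sigma> u) w)"
      by (simp add: algebra_simps sum_subtractf sum_distrib_left)
    also have "\<dots> = 0" using e1 Act_sum[OF strat_act[OF st, of u]] by simp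
    finally have s0: "(\<Sum>w\<in>UNIV. P u (\<sigma> u) w * (?h w - m)) = 0" .
    have nn: "\<forall>w\<in>UNIV. 0 \<le> P u (\<sigma> u) w * (?h w - m)"
    proof
      fix w
      show "0 \<le> P u (\<sigma> u) w * (?h w - m)"
      proof (cases "0 < P u (\<sigma> u) w")
        case True
        then have "w \<in> G" using clG uG uT by blast
        then show ?thesis using True mle by simp
      next
        case False
        then show ?thesis using mdp_nonneg[OF mdp, of u "\<sigma> u" w] by simp
      qed
    qed
    have "P u (\<sigma> u) v * (?h v - m) = 0"
      using s0 nn sum_nonneg_eq_0_iff[of UNIV "\<lambda>w. P u (\<sigma> u) w * (?h w - m)"] by simp
    then show ?thesis using p vG by (simp add: M_def)
  qed
  obtain t where t: "t \<in> T" "(u0,t) \<in> (Ed P \<sigma> T)\<^sup>*" using reachT u0 by blast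
  have "t \<in> M" using t(2)
  proof (induction rule: rtrancl_induct)
    case base then show ?case using u0 by (simp add: M_def)
  next
    case (step y z)
    from step.hyps(2) have "0 < P y (\<sigma> y) z" by (simp add: Ed_def)
    then show ?case by (rule stepM[OF step.IH])
  qed
  then show False using MT t by blast
qed

lemma rD_gen:
  assumes fp: "r = Dtilde o' P T r"
  shows "r u = (if u \<in> T then \<infinity> else opt_enat o' (tm P r u ` Act P u))"
proof -
  have "r u = Dtilde o' P T r u" by (rule fun_cong[OF fp])
  also have "\<dots> = (if u \<in> T then \<infinity> else opt_enat o' (tm P r u ` Act P u))" by (rule Dt_eq)
  finally show ?thesis .
qed

lemma tm_const:
  assumes "Post P u a \<noteq> {}" "\<forall>v\<in>Post P u a. r v = c"
  shows "tm P r u a = c"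
proof -
  have "r ` Post P u a = {c}" using assms by auto
  then show ?thesis using assms by (simp add: tm_def)
qed

lemma tm_le_succ:
  assumes "v \<in> Post P u a"
  shows "tm P r u a \<le> r v + 1"
proof -
  have "Min (r ` Post P u a) \<le> r v" using assms by simp
  moreover have "(if \<exists>x\<in>Post P u a. \<exists>y\<in>Post P u a. r x \<noteq> r y then 1 else 0) \<le> (1::enat)" by (rule ind_le1)
  ultimately show ?thesis unfolding tm_def by (rule add_mono)
qed

lemma tm_inf:
  assumes "tm P r u a = \<infinity>" "v \<in> Post P u a"
  shows "r v = \<infinity>"
proof -
  have "Min (r ` Post P u a) = \<infinity> \<or> (if \<exists>x\<in>Post P u a. \<exists>y\<in>Post P u a. r x \<noteq> r y then 1 else 0::enat) = \<infinity>"
    using assms(1) unfolding tm_def by (simp only: plus_eq_infty_iff_enat)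
  then have "Min (r ` Post P u a) = \<infinity>" using ind_fin by blast
  moreover have "Min (r ` Post P u a) \<le> r v" using assms(2) by simp
  ultimately show ?thesis by simp
qed

lemma min_fwd:
  assumes mdp: "is_mdp P" and fp: "r = Dtilde OMin P T r"
    and least: "\<And>r'. Dtilde OMin P T r' \<le> r' \<Longrightarrow> r \<le> r'"
    and st: "\<sigma> \<in> strategies P" and rs: "r s = \<infinity>"
  shows "reach_prob P \<sigma> T s = 1"
proof -
  have rD: "r u = (if u \<in> T then \<infinity> else Min (tm P r u ` Act P u))" for u
    using rD_gen[OF fp, of u] by (simp add: opt_enat_def)
  define A where "A = {u. r u = \<infinity>}"
  define Y where "Y = {u\<in>A. \<exists>t\<in>T. (u,t) \<in> (Ed P \<sigma> T)\<^sup>*}"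
  have TA: "T \<subseteq> A" using rD by (auto simp: A_def)
  have closA: "v \<in> A" if "u \<in> A" "u \<notin> T" "0 < P u (\<sigma> u) v" for u v
  proof -
    have "r u \<le> tm P r u (\<sigma> u)" using rD[of u] that strat_act[OF st, of u] by simp
    then have "tm P r u (\<sigma> u) = \<infinity>" using that by (simp add: A_def)
    moreover have "v \<in> Post P u (\<sigma> u)" using that by (simp add: Post_def)
    ultimately show ?thesis by (simp add: A_def tm_inf)
  qed
  have AY: "A \<subseteq> Y"
  proof (rule ccontr)
    assume nAY: "\<not> A \<subseteq> Y"
    define r' where "r' = (\<lambda>u. if u \<in> A - Y then 0 else r u)"
    have r'le: "r' \<le> r" by (auto simp: r'_def le_fun_def A_def)
    have "Dtilde OMin P T r' \<le> r'"
    proof (rule le_funI)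
      fix u
      have "Dtilde OMin P T r' \<le> Dtilde OMin P T r" by (rule monoD[OF Dt_mono[OF mdp] r'le])
      then have m1: "Dtilde OMin P T r' u \<le> r u" using fp by (metis le_funD)
      show "Dtilde OMin P T r' u \<le> r' u"
      proof (cases "u \<in> A - Y")
        case False
        then have "r' u = r u" by (auto simp: r'_def)
        then show ?thesis using m1 by simp
      next
        case True
        have uT: "u \<notin> T"
        proof
          assume "u \<in> T" then have "u \<in> Y" using TA by (auto simp: Y_def)
          then show False using True by simp
        qed
        have sub: "\<forall>v\<in>Post P u (\<sigma> u). r' v = 0"
        proof
          fix v assume v: "v \<in> Post P u (\<sigma> u)"
          then have p: "0 < P u (\<sigma> u) v" by (simp add: Post_def)
          have vA: "v \<in> A" using closA[OF _ uT p] True by simp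
          have "v \<notin> Y"
          proof
            assume "v \<in> Y"
            then obtain t where "t \<in> T" "(v,t) \<in> (Ed P \<sigma> T)\<^sup>*" by (auto simp: Y_def)
            moreover have "(u,v) \<in> Ed P \<sigma> T" using uT p by (simp add: Ed_def)
            ultimately have "u \<in> Y" using True by (auto simp: Y_def intro: converse_rtrancl_into_rtrancl)
            then show False using True by simp
          qed
          then show "r' v = 0" using vA by (simp add: r'_def)
        qed
        have t0: "tm P r' u (\<sigma> u) = 0"
          by (rule tm_const[OF Post_ne[OF mdp strat_act[OF st]] sub])
        have "Dtilde OMin P T r' u = Min (tm P r' u ` Act P u)" using uT by (simp add: Dt_eq opt_enat_def)
        also have "\<dots> \<le> tm P r' u (\<sigma> u)" using strat_act[OF st, of u] by simp
        finally show ?thesis using t0 by simp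
      qed
    qed
    then have "r \<le> r'" by (rule least)
    moreover obtain u where "u \<in> A - Y" using nAY by blast
    ultimately show False by (auto simp: r'_def A_def le_fun_def dest: spec[of _ u])
  qed
  have "\<forall>u\<in>A. reach_prob P \<sigma> T u = 1"
  proof (rule lemB[OF mdp st])
    show "\<forall>u\<in>A. u \<notin> T \<longrightarrow> (\<forall>v. 0 < P u (\<sigma> u) v \<longrightarrow> v \<in> A)" using closA by blast
    show "\<forall>u\<in>A. \<exists>t\<in>T. (u, t) \<in> (Ed P \<sigma> T)\<^sup>*" using AY by (auto simp: Y_def)
  qed
  then show ?thesis using rs by (simp add: A_def)
qed

fun lev :: "('s::finite \<Rightarrow> 'a::finite \<Rightarrow> 's \<Rightarrow> real) \<Rightarrow> 's set \<Rightarrow> 's set \<Rightarrow> nat \<Rightarrow> 's set" where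
  "lev P A T 0 = T"
| "lev P A T (Suc k) = lev P A T k \<union> {u\<in>A. \<exists>a\<in>Act P u. Post P u a \<subseteq> A \<and> Post P u a \<inter> lev P A T k \<noteq> {}}"

lemma lev_mono_add: "lev P A T j \<subseteq> lev P A T (j + d)"
  by (induction d) auto

lemma lev_mono: "j \<le> k \<Longrightarrow> lev P A T j \<subseteq> lev P A T k"
  using lev_mono_add[of P A T j "k - j"] by simp

lemma max_fwd:
  assumes mdp: "is_mdp P" and fp: "r = Dtilde OMax P T r"
    and least: "\<And>r'. Dtilde OMax P T r' \<le> r' \<Longrightarrow> r \<le> r'"
    and rs: "r s = \<infinity>"
  shows "\<exists>\<sigma>\<in>strategies P. reach_prob P \<sigma> T s = 1"
proof -
  have rD: "r u = (if u \<in> T then \<infinity> else Max (tm P r u ` Act P u))" for u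
    using rD_gen[OF fp, of u] by (simp add: opt_enat_def)
  define A where "A = {u. r u = \<infinity>}"
  have TA: "T \<subseteq> A" using rD by (auto simp: A_def)
  define Attr where "Attr = (\<Union>k. lev P A T k)"
  define N where "N = Max (insert 0 ((\<lambda>v. the_enat (r v)) ` {v. r v \<noteq> \<infinity>}))"
  define c where "c = enat (N + 1)"
  have cbound: "r v + 1 \<le> c" if "r v \<noteq> \<infinity>" for v
  proof -
    have "the_enat (r v) \<le> N" unfolding N_def using that by (intro Max_ge) auto
    moreover have "r v = enat (the_enat (r v))" using that by auto
    ultimately show ?thesis unfolding c_def by (metis enat_ord_simps(1) add_right_mono one_enat_def plus_enat_simps(1))
  qed
  have AAttr: "A \<subseteq> Attr"
  proof (rule ccontr)
    assume nA: "\<not> A \<subseteq> Attr"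
    define r' where "r' = (\<lambda>u. if u \<in> A - Attr then c else r u)"
    have r'le: "r' \<le> r" by (auto simp: r'_def le_fun_def A_def)
    have "Dtilde OMax P T r' \<le> r'"
    proof (rule le_funI)
      fix u
      have "Dtilde OMax P T r' \<le> Dtilde OMax P T r" by (rule monoD[OF Dt_mono[OF mdp] r'le])
      then have m1: "Dtilde OMax P T r' u \<le> r u" using fp by (metis le_funD)
      show "Dtilde OMax P T r' u \<le> r' u"
      proof (cases "u \<in> A - Attr")
        case False
        then have "r' u = r u" by (auto simp: r'_def)
        then show ?thesis using m1 by simp
      next
        case True
        have uT: "u \<notin> T"
        proof
          assume "u \<in> T" then have "u \<in> Attr" unfolding Attr_def using lev.simps(1)[of P A T] by blast
          then show False using True by simp
        qed
        have "tm P r' u a \<le> c" if a: "a \<in> Act P u" for a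
        proof (cases "Post P u a \<subseteq> A")
          case True
          have "\<forall>v\<in>Post P u a. r' v = c"
          proof
            fix v assume v: "v \<in> Post P u a"
            have "v \<notin> Attr"
            proof
              assume "v \<in> Attr"
              then obtain k where "v \<in> lev P A T k" by (auto simp: Attr_def)
              then have "u \<in> lev P A T (Suc k)" using a True v \<open>u \<in> A - Attr\<close> by auto
              then show False using \<open>u \<in> A - Attr\<close> unfolding Attr_def by blast
            qed
            then show "r' v = c" using v True by (auto simp: r'_def)
          qed
          then have "tm P r' u a = c" by (rule tm_const[OF Post_ne[OF mdp a]])
          then show ?thesis by simp
        next
          case False
          then obtain v where v: "v \<in> Post P u a" "v \<notin> A" by blast
          have "tm P r' u a \<le> r' v + 1" by (rule tm_le_succ[OF v(1)])
          also have "r' v = r v" using v by (simp add: r'_def)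
          also have "r v + 1 \<le> c" using v by (intro cbound) (simp add: A_def)
          finally show ?thesis .
        qed
        then have "Max (tm P r' u ` Act P u) \<le> c" using Act_ne[OF mdp, of u] by simp
        then show ?thesis using uT True by (simp add: Dt_eq opt_enat_def r'_def)
      qed
    qed
    then have "r \<le> r'" by (rule least)
    moreover obtain u where "u \<in> A - Attr" using nA by blast
    moreover have "c \<noteq> \<infinity>" by (simp add: c_def)
    ultimately show False by (auto simp: r'_def A_def le_fun_def dest: spec[of _ u])
  qed
  define K where "K = (\<lambda>u. LEAST k. u \<in> lev P A T k)"
  define \<sigma> where "\<sigma> = (\<lambda>u. if u \<in> A - T then (SOME a. a \<in> Act P u \<and> Post P u a \<subseteq> A \<and> Post P u a \<inter> lev P A T (K u - 1) \<noteq> {})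
                       else (SOME a. a \<in> Act P u))"
  have key: "\<sigma> u \<in> Act P u \<and> Post P u (\<sigma> u) \<subseteq> A \<and> Post P u (\<sigma> u) \<inter> lev P A T (K u - 1) \<noteq> {}"
    if u: "u \<in> A - T" for u
  proof -
    have "\<exists>k. u \<in> lev P A T k" using u AAttr by (auto simp: Attr_def)
    then have uK: "u \<in> lev P A T (K u)" unfolding K_def by (rule LeastI_ex)
    have "K u \<noteq> 0"
    proof
      assume "K u = 0"
      then have "u \<in> T" using uK by simp
      then show False using u by simp
    qed
    then obtain j where j: "K u = Suc j" by (cases "K u") auto
    have "u \<notin> lev P A T j"
    proof
      assume "u \<in> lev P A T j"
      then have "K u \<le> j" unfolding K_def by (rule Least_le)
      then show False using j by simp
    qed
    then have "\<exists>a. a \<in> Act P u \<and> Post P u a \<subseteq> A \<and> Post P u a \<inter> lev P A T (K u - 1) \<noteq> {}"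
      using uK j by auto
    then have "(SOME a. a \<in> Act P u \<and> Post P u a \<subseteq> A \<and> Post P u a \<inter> lev P A T (K u - 1) \<noteq> {}) \<in> Act P u \<and>
      Post P u (SOME a. a \<in> Act P u \<and> Post P u a \<subseteq> A \<and> Post P u a \<inter> lev P A T (K u - 1) \<noteq> {}) \<subseteq> A \<and>
      Post P u (SOME a. a \<in> Act P u \<and> Post P u a \<subseteq> A \<and> Post P u a \<inter> lev P A T (K u - 1) \<noteq> {}) \<inter> lev P A T (K u - 1) \<noteq> {}"
      by (rule someI_ex)
    then show ?thesis using u by (simp add: \<sigma>_def)
  qed
  have st: "\<sigma> \<in> strategies P"
    unfolding strategies_def
  proof (intro CollectI allI)
    fix u
    show "\<sigma> u \<in> Act P u"
    proof (cases "u \<in> A - T")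
      case True then show ?thesis using key by blast
    next
      case False
      have "\<exists>a. a \<in> Act P u" using Act_ne[OF mdp, of u] by blast
      then have "(SOME a. a \<in> Act P u) \<in> Act P u" by (rule someI_ex)
      then show ?thesis using False by (auto simp: \<sigma>_def)
    qed
  qed
  have reach: "\<forall>u\<in>lev P A T k. \<exists>t\<in>T. (u,t) \<in> (Ed P \<sigma> T)\<^sup>*" for k
  proof (induction k)
    case 0 then show ?case by auto
  next
    case (Suc k)
    show ?case
    proof
      fix u assume u: "u \<in> lev P A T (Suc k)"
      show "\<exists>t\<in>T. (u,t) \<in> (Ed P \<sigma> T)\<^sup>*"
      proof (cases "u \<in> lev P A T k")
        case True then show ?thesis using Suc by blast
      next
        case False
        have uA: "u \<in> A" using u False by auto
        show ?thesis
        proof (cases "u \<in> T")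
          case True then show ?thesis by blast
        next
          case uT: False
          obtain v where v: "v \<in> Post P u (\<sigma> u)" "v \<in> lev P A T (K u - 1)" using key[of u] uA uT by blast
          have "K u \<le> Suc k" unfolding K_def using u by (rule Least_le)
          then have "K u - 1 \<le> k" by simp
          then have "v \<in> lev P A T k" using v(2) lev_mono[of "K u - 1" k P A T] by blast
          then obtain t where t: "t \<in> T" "(v,t) \<in> (Ed P \<sigma> T)\<^sup>*" using Suc by blast
          have "(u,v) \<in> Ed P \<sigma> T" using uT v(1) by (simp add: Ed_def Post_def)
          then show ?thesis using t by (blast intro: converse_rtrancl_into_rtrancl)
        qed
      qed
    qed
  qed
  have "\<forall>u\<in>A. reach_prob P \<sigma> T u = 1"
  proof (rule lemB[OF mdp st])
    show "\<forall>u\<in>A. u \<notin> T \<longrightarrow> (\<forall>v. 0 < P u (\<sigma> u) v \<longrightarrow> v \<in> A)"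
      using key by (auto simp: Post_def)
    show "\<forall>u\<in>A. \<exists>t\<in>T. (u, t) \<in> (Ed P \<sigma> T)\<^sup>*" using AAttr reach by (auto simp: Attr_def)
  qed
  then show ?thesis using rs st by (auto simp: A_def)
qed

theorem lemma3:
  fixes P :: "'s::finite \<Rightarrow> 'a::finite \<Rightarrow> 's \<Rightarrow> real"
    and T :: "'s set" and o' :: opt and s :: 's
  assumes "is_mdp P"
  shows "lfp (Dtilde o' P T) s = \<infinity> \<longleftrightarrow> reach_prob_opt o' P T s = 1"
proof -
  note mdp = assms
  define r where "r = lfp (Dtilde o' P T)"
  have fp: "r = Dtilde o' P T r" unfolding r_def by (rule lfp_unfold[OF Dt_mono[OF mdp]])
  have least: "\<And>r'. Dtilde o' P T r' \<le> r' \<Longrightarrow> r \<le> r'" unfolding r_def by (rule lfp_lowerbound)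
  let ?S = "strategies P"
  let ?H = "(\<lambda>\<sigma>. reach_prob P \<sigma> T s) ` ?S"
  have finS: "finite ?S" by simp
  define \<sigma>0 where "\<sigma>0 = (\<lambda>u. SOME a. a \<in> Act P u)"
  have "\<sigma>0 \<in> ?S"
    unfolding strategies_def \<sigma>0_def
  proof (intro CollectI allI)
    fix u
    have "\<exists>a. a \<in> Act P u" using Act_ne[OF mdp, of u] by blast
    then show "(SOME a. a \<in> Act P u) \<in> Act P u" by (rule someI_ex)
  qed
  then have neS: "?S \<noteq> {}" by blast
  have finH: "finite ?H" using finS by simp
  have neH: "?H \<noteq> {}" using neS by simp
  have Hle: "\<And>x. x \<in> ?H \<Longrightarrow> x \<le> 1" using rp_bounds[OF mdp] by auto
  have rT: "\<forall>t\<in>T. r t = \<infinity>" using rD_gen[OF fp] by simp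
  have "r s = \<infinity> \<longleftrightarrow> reach_prob_opt o' P T s = 1"
  proof (cases o')
    case OMin
    have opt: "reach_prob_opt o' P T s = Min ?H"
      using OMin cInf_eq_Min[OF finH neH] by (simp add: reach_prob_opt_def opt_real_def)
    have fpm: "r = Dtilde OMin P T r" using fp OMin by simp
    have leastm: "\<And>r'. Dtilde OMin P T r' \<le> r' \<Longrightarrow> r \<le> r'" using least OMin by simp
    show ?thesis
    proof
      assume rs: "r s = \<infinity>"
      have "\<forall>x\<in>?H. x = 1" using min_fwd[OF mdp fpm leastm _ rs] by auto
      moreover have "Min ?H \<in> ?H" by (rule Min_in[OF finH neH])
      ultimately have "Min ?H = 1" by blast
      then show "reach_prob_opt o' P T s = 1" using opt by simp
    next
      assume h1: "reach_prob_opt o' P T s = 1"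
      have rD: "r u = (if u \<in> T then \<infinity> else Min (tm P r u ` Act P u))" for u
        using rD_gen[OF fpm, of u] by (simp add: opt_enat_def)
      define \<sigma> where "\<sigma> = (\<lambda>u. SOME a. a \<in> Act P u \<and> (u \<notin> T \<longrightarrow> tm P r u a = r u))"
      have sp: "\<sigma> u \<in> Act P u \<and> (u \<notin> T \<longrightarrow> tm P r u (\<sigma> u) = r u)" for u
      proof -
        have "\<exists>a. a \<in> Act P u \<and> (u \<notin> T \<longrightarrow> tm P r u a = r u)"
        proof (cases "u \<in> T")
          case True then show ?thesis using Act_ne[OF mdp, of u] by blast
        next
          case False
          have "Min (tm P r u ` Act P u) \<in> tm P r u ` Act P u"
            by (rule Min_in) (use Act_ne[OF mdp, of u] in auto)
          then show ?thesis using False rD[of u] by auto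
        qed
        then show ?thesis unfolding \<sigma>_def by (rule someI_ex)
      qed
      have st: "\<sigma> \<in> ?S" using sp by (simp add: strategies_def)
      have "Min ?H \<le> reach_prob P \<sigma> T s" using st finH by simp
      then have "reach_prob P \<sigma> T s = 1" using h1 opt rp_bounds[OF mdp st, of T s] by simp
      then have hs: "reach_prob P \<sigma> T s = 1" .
      have rle: "\<forall>u. u \<notin> T \<longrightarrow> tm P r u (\<sigma> u) \<le> r u" using sp by simp
      show "r s = \<infinity>" by (rule lemA[OF mdp st rT rle hs])
    qed
  next
    case OMax
    have opt: "reach_prob_opt o' P T s = Max ?H"
      using OMax cSup_eq_Max[OF finH neH] by (simp add: reach_prob_opt_def opt_real_def)
    have fpm: "r = Dtilde OMax P T r" using fp OMax by simp
    have leastm: "\<And>r'. Dtilde OMax P T r' \<le> r' \<Longrightarrow> r \<le> r'" using least OMax by simp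
    show ?thesis
    proof
      assume rs: "r s = \<infinity>"
      obtain \<sigma> where st: "\<sigma> \<in> ?S" and h: "reach_prob P \<sigma> T s = 1"
        using max_fwd[OF mdp fpm leastm rs] by blast
      have "1 \<le> Max ?H" using st h finH by (metis Max_ge image_eqI)
      moreover have "Max ?H \<le> 1" using Hle Max_in[OF finH neH] by blast
      ultimately show "reach_prob_opt o' P T s = 1" using opt by simp
    next
      assume h1: "reach_prob_opt o' P T s = 1"
      have rD: "r u = (if u \<in> T then \<infinity> else Max (tm P r u ` Act P u))" for u
        using rD_gen[OF fpm, of u] by (simp add: opt_enat_def)
      have "Max ?H \<in> ?H" by (rule Max_in[OF finH neH])
      then obtain \<sigma> where st: "\<sigma> \<in> ?S" and h: "reach_prob P \<sigma> T s = 1" using h1 opt by auto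
      show "r s = \<infinity>"
      proof (rule lemA[OF mdp st rT _ h], intro allI impI)
        fix u assume "u \<notin> T"
        then show "tm P r u (\<sigma> u) \<le> r u" using rD[of u] strat_act[OF st, of u] by simp
      qed
    qed
  qed
  then show ?thesis by (simp add: r_def)
qed
end
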